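(* Suppose $G$ has the form (PL) and (A6') holds. Then (A6) holds.
   Context: $\Theta\subseteq\mathbb R^m$ nonempty compact; $\mathbb P^Z$ a probability measure on $\mathcal B(\mathbb R^d)$. (PL): $G(\theta,z)=\sum_{i=1}^r\big(\min_{l\le s_i}\mathbb 1_{I_{il}}(L^i_l(T(\theta)+z)+a^i_l)\big)(\Lambda_i(T(\theta)+z)+b_i)$ with $r,s_i\in\mathbb N$, $a^i_l,b_i\in\mathbb R$, $\Lambda_i,L^i_l:\mathbb R^d\to\mathbb R$ and $T:\mathbb R^m\to\mathbb R^d$ linear, $]0,\infty[\subseteq I_{il}\subseteq[0,\infty[$, the $r$ min-indicator factors pairwise having zero product and summing to $1$ for all $(\theta,z)$. (A6'): for every $i\in\{1,\dots,r\}$ and $l\in\{1,\dots,s_i\}$ with $I_{il}=[0,\infty[$, the set $\{z\in\mathbb R^d: L^i_l(z)\in\{-L^i_l(T(\theta))-a^i_l:\theta\in\Theta\}\}$ is a $\mathbb P^Z$-null set. (A6): there exist an at most countable $\bar\Theta\subseteq\Theta$ and $(\mathbb P^Z)^{\otimes n}$-null sets $N_n\subseteq\mathbb R^{dn}$ ($n\in\mathbb N$) such that $\inf_{\vartheta\in\bar\Theta}\max_{j\le n}|G(\theta,z_j)-G(\vartheta,z_j)|=0$ for all $n$, $\theta\in\Theta$, $(z_1,\dots,z_n)\in\mathbb R^{dn}\setminus N_n$. *)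

theory Defs
  imports "HOL-Probability.Probability"
begin

definition PL_factor ::
  "(nat \<Rightarrow> nat) \<Rightarrow> (nat \<Rightarrow> nat \<Rightarrow> real set) \<Rightarrow> (nat \<Rightarrow> nat \<Rightarrow> 'd \<Rightarrow> real)
   \<Rightarrow> (nat \<Rightarrow> nat \<Rightarrow> real) \<Rightarrow> ('m \<Rightarrow> 'd::plus) \<Rightarrow> nat \<Rightarrow> 'm \<Rightarrow> 'd \<Rightarrow> real" where
  "PL_factor s I L a T i \<theta> z =
     Min ((\<lambda>l. indicator (I i l) (L i l (T \<theta> + z) + a i l)) ` {1..s i})"

end

theory Submission
  imports Defs
begin

theorem lemma6p3:
  fixes \<Theta> :: "(real^'m) set"
    and P :: "(real^'d) measure"
    and G :: "real^'m \<Rightarrow> real^'d \<Rightarrow> real"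
    and r :: nat and s :: "nat \<Rightarrow> nat"
    and a :: "nat \<Rightarrow> nat \<Rightarrow> real" and b :: "nat \<Rightarrow> real"
    and \<Lambda> :: "nat \<Rightarrow> real^'d \<Rightarrow> real"
    and L :: "nat \<Rightarrow> nat \<Rightarrow> real^'d \<Rightarrow> real"
    and T :: "real^'m \<Rightarrow> real^'d"
    and I :: "nat \<Rightarrow> nat \<Rightarrow> real set"
  assumes Theta: "compact \<Theta>" "\<Theta> \<noteq> {}"
    and P: "prob_space P" "sets P = sets borel"
    and r_pos: "r \<ge> 1" and s_pos: "\<And>i. i \<in> {1..r} \<Longrightarrow> s i \<ge> 1"
    and lin_T: "linear T"
    and lin_Lambda: "\<And>i. i \<in> {1..r} \<Longrightarrow> linear (\<Lambda> i)"
    and lin_L: "\<And>i l. i \<in> {1..r} \<Longrightarrow> l \<in> {1..s i} \<Longrightarrow> linear (L i l)"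
    and I_bounds: "\<And>i l. i \<in> {1..r} \<Longrightarrow> l \<in> {1..s i} \<Longrightarrow> {0<..} \<subseteq> I i l \<and> I i l \<subseteq> {0..}"
    and G_PL: "\<And>\<theta> z. \<theta> \<in> \<Theta> \<Longrightarrow>
        G \<theta> z = (\<Sum>i\<in>{1..r}. PL_factor s I L a T i \<theta> z * (\<Lambda> i (T \<theta> + z) + b i))"
    and factors_disj: "\<And>i j \<theta> z. i \<in> {1..r} \<Longrightarrow> j \<in> {1..r} \<Longrightarrow> i \<noteq> j \<Longrightarrow> \<theta> \<in> \<Theta> \<Longrightarrow>
        PL_factor s I L a T i \<theta> z * PL_factor s I L a T j \<theta> z = 0"
    and factors_sum: "\<And>\<theta> z. \<theta> \<in> \<Theta> \<Longrightarrow> (\<Sum>i\<in>{1..r}. PL_factor s I L a T i \<theta> z) = 1"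
    and A6': "\<And>i l. i \<in> {1..r} \<Longrightarrow> l \<in> {1..s i} \<Longrightarrow> I i l = {0..} \<Longrightarrow>
        {z. L i l z \<in> {- L i l (T \<theta>) - a i l | \<theta>. \<theta> \<in> \<Theta>}} \<in> null_sets P"
  shows "\<exists>\<Theta>' (N :: nat \<Rightarrow> (nat \<Rightarrow> real^'d) set). countable \<Theta>' \<and> \<Theta>' \<subseteq> \<Theta> \<and>
     (\<forall>n\<ge>1. N n \<in> null_sets (PiM {1..n} (\<lambda>_. P))) \<and>
     (\<forall>n\<ge>1. \<forall>\<theta>\<in>\<Theta>. \<forall>zs \<in> space (PiM {1..n} (\<lambda>_. P)) - N n.
        (INF \<theta>'\<in>\<Theta>'. Max ((\<lambda>j. \<bar>G \<theta> (zs j) - G \<theta>' (zs j)\<bar>) ` {1..n})) = 0)"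
proof -
  let ?F = "PL_factor s I L a T"
  have F01: "?F i \<theta> z \<in> {0,1}" if "i \<in> {1..r}" for i \<theta> z
  proof -
    have ne: "{1..s i} \<noteq> {}" using s_pos[OF that] by auto
    have "?F i \<theta> z \<in> (\<lambda>l. indicator (I i l) (L i l (T \<theta> + z) + a i l)) ` {1..s i}"
      unfolding PL_factor_def by (rule Min_in) (use ne in auto)
    then show ?thesis by (auto simp: indicator_def)
  qed
  have Gact: "G \<theta> z = \<Lambda> i (T \<theta> + z) + b i"
    if th: "\<theta>\<in>\<Theta>" and i: "i\<in>{1..r}" and F1: "?F i \<theta> z = 1" for \<theta> z i
  proof -
    have "G \<theta> z = (\<Sum>j\<in>{1..r}. ?F j \<theta> z * (\<Lambda> j (T \<theta> + z) + b j))" using G_PL[OF th] .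
    also have "\<dots> = ?F i \<theta> z * (\<Lambda> i (T \<theta> + z) + b i)
        + (\<Sum>j\<in>{1..r}-{i}. ?F j \<theta> z * (\<Lambda> j (T \<theta> + z) + b j))"
      by (rule sum.remove) (use i in auto)
    also have "(\<Sum>j\<in>{1..r}-{i}. ?F j \<theta> z * (\<Lambda> j (T \<theta> + z) + b j)) = 0"
    proof (rule sum.neutral, rule ballI)
      fix j assume j: "j \<in> {1..r}-{i}"
      have "?F i \<theta> z * ?F j \<theta> z = 0" using factors_disj[of i j \<theta> z] i j th by auto
      then show "?F j \<theta> z * (\<Lambda> j (T \<theta> + z) + b j) = 0" using F1 by simp
    qed
    finally show ?thesis using F1 by simp
  qed
  have Gex: "\<exists>i\<in>{1..r}. ?F i \<theta> z = 1" if th: "\<theta>\<in>\<Theta>" for \<theta> z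
  proof (rule ccontr)
    assume "\<not> ?thesis"
    then have "\<forall>i\<in>{1..r}. ?F i \<theta> z = 0" using F01 by blast
    then have "(\<Sum>i\<in>{1..r}. ?F i \<theta> z) = 0" by simp
    then show False using factors_sum[OF th] by simp
  qed
  define Zs where "Zs i l = {z. L i l z \<in> {- L i l (T \<theta>) - a i l | \<theta>. \<theta> \<in> \<Theta>}}" for i l
  define K where "K = Sigma {1..r} (\<lambda>i. {l. l\<in>{1..s i} \<and> I i l = {0..}})"
  define Z0 where "Z0 = (\<Union>(i,l)\<in>K. Zs i l)"
  have finK: "finite K" unfolding K_def by (intro finite_SigmaI) auto
  have Z0null: "Z0 \<in> null_sets P"
    unfolding Z0_def
  proof (rule null_sets_UN')
    show "countable K" using finK by (rule countable_finite)
    fix x assume x: "x \<in> K"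
    obtain i l where x': "x = (i,l)" by (cases x)
    have "Zs i l \<in> null_sets P" unfolding Zs_def
      by (rule A6') (use x x' in \<open>auto simp: K_def\<close>)
    then show "(case x of (i, l) \<Rightarrow> Zs i l) \<in> null_sets P" using x' by simp
  qed
  have contL: "continuous_on UNIV (L i l)" if "i \<in> {1..r}" "l \<in> {1..s i}" for i l
    using lin_L[OF that] by (simp add: linear_conv_bounded_linear linear_continuous_on)
  have contLam: "continuous_on UNIV (\<Lambda> i)" if "i \<in> {1..r}" for i
    using lin_Lambda[OF that] by (simp add: linear_conv_bounded_linear linear_continuous_on)
  have contT: "continuous_on UNIV T"
    using lin_T by (simp add: linear_conv_bounded_linear linear_continuous_on)
  have local: "\<exists>U. open U \<and> \<theta> \<in> U \<and> (\<forall>\<theta>'\<in>\<Theta>\<inter>U. \<bar>G \<theta> z - G \<theta>' z\<bar> < e)"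
    if th: "\<theta>\<in>\<Theta>" and z: "z \<notin> Z0" and e: "e > 0" for \<theta> z e
  proof -
    obtain i where i: "i\<in>{1..r}" and F1: "?F i \<theta> z = 1" using Gex[OF th] by blast
    have fin: "finite {1..s i}" and ne: "{1..s i} \<noteq> {}" using s_pos[OF i] by auto
    have pos: "L i l (T \<theta> + z) + a i l > 0" if l: "l \<in> {1..s i}" for l
    proof -
      have "?F i \<theta> z \<le> indicator (I i l) (L i l (T \<theta> + z) + a i l)"
        unfolding PL_factor_def by (rule Min_le) (use l in auto)
      then have mem: "L i l (T \<theta> + z) + a i l \<in> I i l" using F1 by (cases "L i l (T \<theta> + z) + a i l \<in> I i l") auto
      have bnd: "{0<..} \<subseteq> I i l" "I i l \<subseteq> {0..}" using I_bounds[OF i l] by auto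
      have ge: "L i l (T \<theta> + z) + a i l \<ge> 0" using mem bnd by auto
      show ?thesis
      proof (rule ccontr)
        assume "\<not> ?thesis"
        then have eq0: "L i l (T \<theta> + z) + a i l = 0" using ge by simp
        then have "0 \<in> I i l" using mem by simp
        then have "I i l = {0..}" using bnd by (auto simp: less_eq_real_def)
        then have "(i,l) \<in> K" using i l by (auto simp: K_def)
        moreover have "z \<in> Zs i l"
        proof -
          have "L i l (T \<theta> + z) = L i l (T \<theta>) + L i l z"
            using lin_L[OF i l] by (simp add: linear_add)
          then have "L i l z = - L i l (T \<theta>) - a i l" using eq0 by simp
          then show ?thesis unfolding Zs_def using th by blast
        qed
        ultimately have "z \<in> Z0" unfolding Z0_def by blast
        then show False using z by simp
      qed
    qed
    define U1 where "U1 = (\<Inter>l\<in>{1..s i}. {\<theta>'. 0 < L i l (T \<theta>' + z) + a i l})"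
    define U2 where "U2 = {\<theta>'. \<bar>\<Lambda> i (T \<theta>' + z) + b i - (\<Lambda> i (T \<theta> + z) + b i)\<bar> < e}"
    have oU1: "open U1" unfolding U1_def
    proof (rule open_INT[OF fin], rule ballI, rule open_Collect_less)
      fix l assume l: "l \<in> {1..s i}"
      show "continuous_on UNIV (\<lambda>x::real^'m. 0::real)" by (rule continuous_on_const)
      have bl: "bounded_linear (L i l)" using lin_L[OF i l] by (simp add: linear_conv_bounded_linear)
      have c1: "continuous_on UNIV (\<lambda>\<theta>'. T \<theta>' + z)" by (intro continuous_intros contT)
      show "continuous_on UNIV (\<lambda>\<theta>'. L i l (T \<theta>' + z) + a i l)"
        by (intro continuous_intros bounded_linear.continuous_on[OF bl c1])
    qed
    have oU2: "open U2" unfolding U2_def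
    proof (rule open_Collect_less)
      show "continuous_on UNIV (\<lambda>x::real^'m. e)" by (rule continuous_on_const)
      have bl: "bounded_linear (\<Lambda> i)" using lin_Lambda[OF i] by (simp add: linear_conv_bounded_linear)
      have c1: "continuous_on UNIV (\<lambda>\<theta>'. T \<theta>' + z)" by (intro continuous_intros contT)
      show "continuous_on UNIV (\<lambda>\<theta>'. \<bar>\<Lambda> i (T \<theta>' + z) + b i - (\<Lambda> i (T \<theta> + z) + b i)\<bar>)"
        by (intro continuous_intros bounded_linear.continuous_on[OF bl c1])
    qed
    show ?thesis
    proof (intro exI[of _ "U1 \<inter> U2"] conjI ballI)
      show "open (U1 \<inter> U2)" using oU1 oU2 by auto
      show "\<theta> \<in> U1 \<inter> U2" using pos e by (auto simp: U1_def U2_def)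
      fix \<theta>' assume th': "\<theta>' \<in> \<Theta> \<inter> (U1 \<inter> U2)"
      have "?F i \<theta>' z = 1"
      proof -
        have "(\<lambda>l. indicator (I i l) (L i l (T \<theta>' + z) + a i l)) ` {1..s i} = {1::real}"
        proof -
          have "\<And>l. l \<in> {1..s i} \<Longrightarrow> indicator (I i l) (L i l (T \<theta>' + z) + a i l) = (1::real)"
          proof -
            fix l assume l: "l \<in> {1..s i}"
            have "0 < L i l (T \<theta>' + z) + a i l" using th' l by (auto simp: U1_def)
            then have "L i l (T \<theta>' + z) + a i l \<in> I i l" using I_bounds[OF i l] by auto
            then show "indicator (I i l) (L i l (T \<theta>' + z) + a i l) = (1::real)" by simp
          qed
          then show ?thesis using ne by auto
        qed
        then show ?thesis unfolding PL_factor_def by simp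
      qed
      then have "G \<theta>' z = \<Lambda> i (T \<theta>' + z) + b i" using Gact th' i by blast
      moreover have "G \<theta> z = \<Lambda> i (T \<theta> + z) + b i" using Gact th i F1 by blast
      ultimately show "\<bar>G \<theta> z - G \<theta>' z\<bar> < e" using th' by (auto simp: U2_def)
    qed
  qed
  obtain D where D: "countable D" "D \<subseteq> \<Theta>" "\<Theta> \<subseteq> closure D" by (rule separable)
  have Dne: "D \<noteq> {}" using D Theta(2) by auto
  define N where "N (n::nat) = {zs\<in>space (PiM {1..n} (\<lambda>_. P)). \<exists>j\<in>{1..n}. zs j \<in> Z0}" for n
  have hN: "N n \<in> null_sets (PiM {1..n} (\<lambda>_. P))" if n: "n \<ge> 1" for n :: nat
  proof -
    interpret pps: product_prob_space "\<lambda>_. P" "{1..n}"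
      by (rule product_prob_spaceI) (rule P(1))
    have Z0s: "Z0 \<in> sets P" using Z0null by auto
    have "N n = (\<Union>j\<in>{1..n}. {zs\<in>space (PiM {1..n} (\<lambda>_. P)). zs j \<in> Z0})"
      unfolding N_def by auto
    also have "\<dots> \<in> null_sets (PiM {1..n} (\<lambda>_. P))"
    proof (rule null_sets_UN')
      show "countable {1..n}" by (rule countable_finite) simp
      fix j assume j: "j \<in> {1..n}"
      show "{zs\<in>space (PiM {1..n} (\<lambda>_. P)). zs j \<in> Z0} \<in> null_sets (PiM {1..n} (\<lambda>_. P))"
      proof (rule null_setsI)
        show "emeasure (PiM {1..n} (\<lambda>_. P)) {zs\<in>space (PiM {1..n} (\<lambda>_. P)). zs j \<in> Z0} = 0"
          using pps.emeasure_PiM_Collect_single[OF j Z0s] Z0null by (simp add: null_sets_def)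
        show "{zs\<in>space (PiM {1..n} (\<lambda>_. P)). zs j \<in> Z0} \<in> sets (PiM {1..n} (\<lambda>_. P))"
          by (rule sets_Collect_single[OF j Z0s])
      qed
    qed
    finally show "N n \<in> null_sets (PiM {1..n} (\<lambda>_. P))" .
  qed
  have hI: "(INF \<theta>'\<in>D. Max ((\<lambda>j. \<bar>G \<theta> (zs j) - G \<theta>' (zs j)\<bar>) ` {1..n})) = 0"
    if n: "n \<ge> 1" and th: "\<theta> \<in> \<Theta>" and zs: "zs \<in> space (PiM {1..n} (\<lambda>_. P)) - N n" for n :: nat and \<theta> zs
  proof -
    have zj: "zs j \<notin> Z0" if "j \<in> {1..n}" for j using zs that unfolding N_def by blast
    define f where "f \<theta>' = Max ((\<lambda>j. \<bar>G \<theta> (zs j) - G \<theta>' (zs j)\<bar>) ` {1..n})" for \<theta>'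
    have nne: "{1..n} \<noteq> {}" using n by (simp add: atLeastatMost_empty_iff)
    have f0: "f \<theta>' \<ge> 0" for \<theta>'
    proof -
      have "\<bar>G \<theta> (zs 1) - G \<theta>' (zs 1)\<bar> \<le> f \<theta>'"
        unfolding f_def by (rule Max_ge) (simp, rule imageI, use n in simp)
      then show ?thesis by linarith
    qed
    have bdd: "bdd_below (f ` D)" unfolding bdd_below_def using f0 by blast
    have ge: "(INF \<theta>'\<in>D. f \<theta>') \<ge> 0" by (rule cINF_greatest[OF Dne f0])
    have "\<not> (INF \<theta>'\<in>D. f \<theta>') > 0"
    proof
      assume gt: "(INF \<theta>'\<in>D. f \<theta>') > 0"
      define e where "e = (INF \<theta>'\<in>D. f \<theta>')"
      have "\<forall>j\<in>{1..n}. \<exists>U. open U \<and> \<theta> \<in> U \<and> (\<forall>\<theta>'\<in>\<Theta>\<inter>U. \<bar>G \<theta> (zs j) - G \<theta>' (zs j)\<bar> < e)"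
      proof (intro ballI)
        fix j assume j: "j \<in> {1..n}"
        have "e > 0" using gt by (simp add: e_def)
        then show "\<exists>U. open U \<and> \<theta> \<in> U \<and> (\<forall>\<theta>'\<in>\<Theta>\<inter>U. \<bar>G \<theta> (zs j) - G \<theta>' (zs j)\<bar> < e)"
          by (rule local[OF th zj[OF j]])
      qed
      then obtain U where U: "\<And>j. j\<in>{1..n} \<Longrightarrow> open (U j) \<and> \<theta> \<in> U j \<and> (\<forall>\<theta>'\<in>\<Theta>\<inter>U j. \<bar>G \<theta> (zs j) - G \<theta>' (zs j)\<bar> < e)"
        by metis
      define W where "W = (\<Inter>j\<in>{1..n}. U j)"
      have oW: "open W" unfolding W_def using U by (intro open_INT) auto
      have thW: "\<theta> \<in> W" unfolding W_def using U by auto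
      have "\<theta> \<in> closure D" using D th by auto
      then have "D \<inter> W \<noteq> {}" using oW thW unfolding closure_iff_nhds_not_empty by blast
      then obtain \<theta>' where t1: "\<theta>' \<in> D" "\<theta>' \<in> W" by blast
      have "f \<theta>' < e" unfolding f_def
      proof (subst Max_less_iff)
        show "finite ((\<lambda>j. \<bar>G \<theta> (zs j) - G \<theta>' (zs j)\<bar>) ` {1..n})" by simp
        show "(\<lambda>j. \<bar>G \<theta> (zs j) - G \<theta>' (zs j)\<bar>) ` {1..n} \<noteq> {}" using nne by simp
        show "\<forall>a\<in>(\<lambda>j. \<bar>G \<theta> (zs j) - G \<theta>' (zs j)\<bar>) ` {1..n}. a < e"
        proof
          fix x assume "x \<in> (\<lambda>j. \<bar>G \<theta> (zs j) - G \<theta>' (zs j)\<bar>) ` {1..n}"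
          then obtain j where j: "j \<in> {1..n}" and x: "x = \<bar>G \<theta> (zs j) - G \<theta>' (zs j)\<bar>" by blast
          have "\<theta>' \<in> U j" using t1(2) j unfolding W_def by blast
          moreover have "\<theta>' \<in> \<Theta>" using t1(1) D(2) by blast
          ultimately show "x < e" using U[OF j] x by blast
        qed
      qed
      moreover have "e \<le> f \<theta>'" unfolding e_def by (rule cINF_lower[OF bdd t1(1)])
      ultimately show False by simp
    qed
    then show "(INF \<theta>'\<in>D. Max ((\<lambda>j. \<bar>G \<theta> (zs j) - G \<theta>' (zs j)\<bar>) ` {1..n})) = 0"
      using ge unfolding f_def by linarith
  qed
  show ?thesis
    apply (rule exI[of _ D], rule exI[of _ N])
    using D(1,2) hN hI by simp
qed

end
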